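(* Let $G$ be an abelian group, regarded as a discrete group, and let $V\to BG$ be the $\mathrm{PGL}_n(\mathbb{C})$-bundle associated to a homomorphism $\rho:G\to\mathrm{PU}(n)$. Then there is a subgroup $M\subset G$ of finite index such that the restriction $V|_{BM}$ comes from a complex vector bundle of rank $n$ (equivalently, $\rho|_M$ lifts to a linear representation $M\to\mathrm{GL}_n(\mathbb C)$, and the obstruction class of $V|_{BM}$ vanishes).
   Context: $BG$ is the classifying space of the discrete group $G$ (a $K(G,1)$). For a homomorphism $\rho:G\to L$ into a Lie group $L$, the associated flat principal $L$-bundle on $BG$ is $(EG\times L)/G$ with $G$ acting diagonally. A $\mathrm{PGL}_n$-bundle comes from a vector bundle of rank $n$ if it is the projectivization of one, i.e. lifts along $\mathrm{GL}_n\to\mathrm{PGL}_n$. *)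

theory Defs
  imports "HOL-Analysis.Analysis" "HOL-Algebra.Coset"
begin

text \<open>n x n complex matrices, n = CARD('n).\<close>

definition mat_smult :: "complex \<Rightarrow> complex^'n^'n \<Rightarrow> complex^'n^'n" where
  "mat_smult c A = (\<chi> i j. c * A$i$j)"

definition adjoint_mat :: "complex^'n^'n \<Rightarrow> complex^'n^'n" where
  "adjoint_mat A = (\<chi> i j. cnj (A$j$i))"

definition unitary_mat :: "complex^'n^'n \<Rightarrow> bool" where
  "unitary_mat U \<longleftrightarrow> U ** adjoint_mat U = mat 1 \<and> adjoint_mat U ** U = mat 1"

text \<open>Equality in PGL_n(C): A and B differ by a nonzero scalar.\<close>
definition proj_eq :: "complex^'n^'n \<Rightarrow> complex^'n^'n \<Rightarrow> bool" where
  "proj_eq A B \<longleftrightarrow> (\<exists>c. c \<noteq> 0 \<and> A = mat_smult c B)"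

text \<open>A homomorphism rho : G -> PU(n), given by unitary representatives U g of rho g.\<close>
definition PU_hom :: "('g, 'b) monoid_scheme \<Rightarrow> ('g \<Rightarrow> complex^'n^'n) \<Rightarrow> bool" where
  "PU_hom G U \<longleftrightarrow> (\<forall>g\<in>carrier G. unitary_mat (U g)) \<and>
     (\<forall>g\<in>carrier G. \<forall>h\<in>carrier G. proj_eq (U (g \<otimes>\<^bsub>G\<^esub> h)) (U g ** U h))"

text \<open>A linear representation psi : M -> GL_n(C) lifting rho restricted to M.\<close>
definition GL_lift_on :: "('g, 'b) monoid_scheme \<Rightarrow> 'g set \<Rightarrow> ('g \<Rightarrow> complex^'n^'n)
    \<Rightarrow> ('g \<Rightarrow> complex^'n^'n) \<Rightarrow> bool" where
  "GL_lift_on G M U \<psi> \<longleftrightarrow> (\<forall>m\<in>M. invertible (\<psi> m) \<and> proj_eq (\<psi> m) (U m)) \<and>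
     (\<forall>m\<in>M. \<forall>m'\<in>M. \<psi> (m \<otimes>\<^bsub>G\<^esub> m') = \<psi> m ** \<psi> m')"

end

theory Submission
  imports Defs "HOL-Computational_Algebra.Fundamental_Theorem_Algebra"
begin


definition itv :: "complex^'n^'n \<Rightarrow> nat \<Rightarrow> complex^'n \<Rightarrow> complex^'n" where
  "itv B i w = ((\<lambda>x. B *v x) ^^ i) w"

definition opp :: "complex^'n^'n \<Rightarrow> complex poly \<Rightarrow> complex^'n \<Rightarrow> complex^'n" where
  "opp B p w = (\<Sum>i\<le>degree p. coeff p i *s itv B i w)"

lemma opp_bound:
  assumes "degree p \<le> K"
  shows "opp B p w = (\<Sum>i\<le>K. coeff p i *s itv B i w)"
  unfolding opp_def
  by (rule sum.mono_neutral_left) (use assms in \<open>auto intro!: coeff_eq_0 simp: not_le\<close>)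

lemma opp_add: "opp B (p + q) w = opp B p w + opp B q w"
proof -
  let ?K = "max (degree p) (degree q)"
  have "degree (p+q) \<le> ?K" by (rule degree_add_le) auto
  then show ?thesis
    by (simp add: opp_bound[of _ ?K] opp_bound[of p ?K] opp_bound[of q ?K] vector_sadd_rdistrib sum.distrib)
qed

lemma smult_vec_sum: "(c::complex) *s sum f A = (\<Sum>i\<in>A. c *s f i)"
  by (simp add: vec_eq_iff sum_component sum_distrib_left)

lemma opp_smult: "opp B (smult c p) w = c *s opp B p w"
proof -
  have "degree (smult c p) \<le> degree p" by simp
  then show ?thesis
    by (simp add: opp_bound[of _ "degree p"] opp_def smult_vec_sum vector_smult_assoc)
qed

lemma itv_Suc: "itv B (Suc i) w = B *v itv B i w"
  by (simp add: itv_def)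

lemma itv_0: "itv B 0 w = w"
  by (simp add: itv_def)

lemma opp_pCons0: "opp B (pCons 0 p) w = B *v opp B p w"
proof -
  have "degree (pCons 0 p) \<le> Suc (degree p)" by (rule degree_pCons_le)
  then have "opp B (pCons 0 p) w = (\<Sum>i\<le>Suc (degree p). coeff (pCons 0 p) i *s itv B i w)"
    by (rule opp_bound)
  also have "\<dots> = (\<Sum>i\<le>degree p. coeff p i *s itv B (Suc i) w)"
    unfolding sum.atMost_Suc_shift by simp
  also have "\<dots> = B *v opp B p w"
    by (simp add: opp_def vec.sum itv_Suc vector_scalar_commute)
  finally show ?thesis .
qed

lemma opp_const: "opp B [:c:] w = c *s w"
  by (simp add: opp_def itv_0)

lemma opp_monom: "opp B (monom c k) w = c *s itv B k w"
proof -
  have "degree (monom c k) \<le> k" by (simp add: degree_monom_le)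
  then show ?thesis
    by (simp add: opp_bound[of _ k] coeff_monom if_distrib[where f="\<lambda>c. c *s _"] cong: if_cong)
qed

lemma opp_zero: "opp B 0 w = 0"
  by (simp add: opp_def)

lemma opp_sum: "finite A \<Longrightarrow> opp B (sum f A) w = (\<Sum>i\<in>A. opp B (f i) w)"
  by (induction A rule: finite_induct) (simp_all add: opp_add opp_zero)

lemma opp_diff: "opp B (p - q) w = opp B p w - opp B q w"
proof -
  have "p - q = p + smult (-1) q" by simp
  then show ?thesis by (simp only: opp_add opp_smult) (simp add: vec_eq_iff)
qed

lemma scaleR_vec_complex: "(r::real) *\<^sub>R (v::complex^'n) = complex_of_real r *s v"
  by (simp add: vec_eq_iff) (simp add: scaleR_conv_of_real)

lemma exists_annih:
  fixes B :: "complex^'n^'n"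
  shows "\<exists>p. p \<noteq> 0 \<and> opp B p w = 0"
proof -
  define N where "N = card (Basis :: (complex^'n) set)"
  let ?vs = "\<lambda>i. itv B i w"
  show ?thesis
  proof (cases "inj_on ?vs {..N}")
    case False
    then obtain i j where ij: "i \<le> N" "j \<le> N" "i \<noteq> j" "?vs i = ?vs j"
      by (auto simp: inj_on_def)
    let ?p = "monom 1 i - monom (1::complex) j"
    have "coeff ?p i = 1" using ij(3) by (auto simp: coeff_monom)
    then have "?p \<noteq> 0" by (metis coeff_0 zero_neq_one)
    moreover have "opp B ?p w = 0" using ij by (simp add: opp_diff opp_monom)
    ultimately show ?thesis by blast
  next
    case True
    let ?S = "?vs ` {..N}"
    have "card ?S = Suc N" using True card_image by fastforce
    then have "dependent ?S" by (intro dependent_biggerset) (simp add: N_def)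
    then obtain t u where t: "finite t" "t \<subseteq> ?S" "(\<Sum>v\<in>t. u v *\<^sub>R v) = 0" "\<exists>v\<in>t. u v \<noteq> 0"
      by (auto simp: dependent_explicit)
    define a where "a i = (if ?vs i \<in> t then u (?vs i) else 0)" for i
    let ?p = "\<Sum>i\<le>N. monom (complex_of_real (a i)) i"
    have "opp B ?p w = (\<Sum>i\<le>N. complex_of_real (a i) *s ?vs i)" by (simp add: opp_sum opp_monom)
    also have "\<dots> = (\<Sum>i\<le>N. a i *\<^sub>R ?vs i)" by (simp add: scaleR_vec_complex)
    also have "\<dots> = (\<Sum>v\<in>?S. (if v \<in> t then u v else 0) *\<^sub>R v)"
      by (subst sum.reindex[OF True]) (simp add: a_def)
    also have "\<dots> = (\<Sum>v\<in>t. (if v \<in> t then u v else 0) *\<^sub>R v)"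
      by (rule sum.mono_neutral_right) (use t in auto)
    also have "\<dots> = 0" using t(3) by simp
    finally have z: "opp B ?p w = 0" .
    obtain v where v: "v \<in> t" "u v \<noteq> 0" using t(4) by blast
    then obtain k where k: "k \<le> N" "v = ?vs k" using t(2) by blast
    have "coeff ?p k = complex_of_real (a k)" using k(1) by (simp add: coeff_sum coeff_monom)
    also have "\<dots> \<noteq> 0" using v k by (simp add: a_def)
    finally have "?p \<noteq> 0" by (metis coeff_0)
    with z show ?thesis by blast
  qed
qed

lemma eigen_exists:
  fixes B :: "complex^'n^'n"
  assumes "w \<noteq> 0"
  shows "\<exists>q r. opp B q w \<noteq> 0 \<and> B *v opp B q w = r *s opp B q w"
proof -
  obtain p0 where p0: "p0 \<noteq> 0 \<and> opp B p0 w = 0" using exists_annih[of B w] by blast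
  have "\<exists>p. (p \<noteq> 0 \<and> opp B p w = 0) \<and> (\<forall>p'. p' \<noteq> 0 \<and> opp B p' w = 0 \<longrightarrow> degree p \<le> degree p')"
    by (rule ex_has_least_nat[of "\<lambda>p. p \<noteq> 0 \<and> opp B p w = 0" p0 degree]) (rule p0)
  then obtain p where pP: "p \<noteq> 0 \<and> opp B p w = 0"
    and pmin: "\<forall>p'. p' \<noteq> 0 \<and> opp B p' w = 0 \<longrightarrow> degree p \<le> degree p'"
    by blast
  have p1: "p \<noteq> 0" and p2: "opp B p w = 0" using pP by auto
  have "degree p \<noteq> 0"
  proof
    assume d: "degree p = 0"
    obtain c where pc: "p = [:c:]" using degree_eq_zeroE[OF d] by blast
    then have "opp B p w = c *s w" using opp_const[of B c w] by simp
    moreover have "c \<noteq> 0" using pc p1 by auto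
    ultimately show False using p2 assms by (auto simp: vec_eq_iff)
  qed
  then have "0 < degree p" by simp
  then obtain z where "poly p z = 0" using alg_closed_imp_poly_has_root[of p] by blast
  then have "[:-z,1:] dvd p" using dvd_iff_poly_eq_0[of "-z" p] by simp
  then obtain q where pq: "p = [:-z,1:] * q" by (rule dvdE)
  have q0: "q \<noteq> 0" using pq p1 by auto
  have "degree p = degree [:-z,1:] + degree q"
    unfolding pq by (rule degree_mult_eq) (use q0 in auto)
  then have "degree p = Suc (degree q)" by simp
  then have "\<not> degree p \<le> degree q" by simp
  then have u0: "opp B q w \<noteq> 0" using pmin q0 by blast
  have "p = smult (-z) q + pCons 0 q" using pq by simp
  then have "opp B p w = - z *s opp B q w + B *v opp B q w"
    by (simp add: opp_add opp_diff opp_smult opp_pCons0)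
  then have h: "- z *s opp B q w + B *v opp B q w = 0" using p2 by simp
  have "B *v opp B q w = (- z *s opp B q w + B *v opp B q w) + z *s opp B q w"
    by (simp add: vec_eq_iff)
  also have "\<dots> = z *s opp B q w" using h by simp
  finally show ?thesis using u0 by blast
qed

lemma itv_commute: "X ** B = B ** X \<Longrightarrow> X *v itv B i w = itv B i (X *v w)"
proof (induction i)
  case (Suc i)
  then show ?case by (simp add: itv_Suc) (metis matrix_vector_mul_assoc)
qed (simp add: itv_0)

lemma itv_scale: "itv B i (l *s w) = l *s itv B i w"
  by (induction i) (simp_all add: itv_0 itv_Suc vector_scalar_commute)

lemma opp_commute_eig:
  assumes "X ** B = B ** X" "X *v w = l *s w"
  shows "X *v opp B q w = l *s opp B q w"
  using assms
  by (simp add: opp_def vec.sum vector_scalar_commute itv_commute itv_scale smult_vec_sum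
      vector_smult_assoc mult.commute)

lemma common_eig_finite:
  fixes F :: "(complex^'n^'n) set"
  shows "finite F \<Longrightarrow> (\<forall>A\<in>F. \<forall>A'\<in>F. A ** A' = A' ** A) \<Longrightarrow>
    \<exists>w::complex^'n. w \<noteq> 0 \<and> (\<forall>A\<in>F. \<exists>l. A *v w = l *s w)"
proof (induction F rule: finite_induct)
  case empty
  have "(vec 1 :: complex^'n) \<noteq> 0" by (simp add: vec_eq_iff)
  then show ?case by blast
next
  case (insert B F)
  have "\<forall>A\<in>F. \<forall>A'\<in>F. A ** A' = A' ** A" using insert.prems by blast
  then obtain w :: "complex^'n" where w: "w \<noteq> 0" "\<forall>A\<in>F. \<exists>l. A *v w = l *s w"
    using insert.IH by blast
  obtain q r where qr: "opp B q w \<noteq> 0" "B *v opp B q w = r *s opp B q w"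
    using eigen_exists[OF w(1)] by blast
  have "\<forall>A\<in>F. \<exists>l. A *v opp B q w = l *s opp B q w"
  proof
    fix A assume A: "A \<in> F"
    then obtain l where l: "A *v w = l *s w" using w by blast
    have AB: "A ** B = B ** A" using insert.prems A by blast
    show "\<exists>l. A *v opp B q w = l *s opp B q w"
      by (rule exI[of _ l], rule opp_commute_eig[OF AB l])
  qed
  with qr show ?case by blast
qed

lemma matvec_scaleR: "((c::real) *\<^sub>R (A::complex^'n^'n)) *v w = complex_of_real c *s (A *v w)"
  by (simp add: vec_eq_iff matrix_vector_mult_def sum_distrib_left) (simp add: scaleR_conv_of_real mult.assoc)

lemma matvec_add: "((A::complex^'n^'n) + A') *v w = A *v w + A' *v w"
  by (simp add: vec_eq_iff matrix_vector_mult_def sum.distrib distrib_right)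

lemma common_eig:
  fixes S :: "(complex^'n^'n) set"
  assumes "\<forall>A\<in>S. \<forall>A'\<in>S. A ** A' = A' ** A"
  shows "\<exists>w::complex^'n. w \<noteq> 0 \<and> (\<forall>A\<in>S. \<exists>l. A *v w = l *s w)"
proof -
  obtain B where B: "B \<subseteq> S" "independent B" "S \<subseteq> span B" "card B = dim S"
    by (rule real_vector.basis_exists[of S])
  have "finite B" using independent_bound[OF B(2)] by (rule conjunct1)
  moreover have "\<forall>A\<in>B. \<forall>A'\<in>B. A ** A' = A' ** A" using assms B(1) by blast
  ultimately obtain w :: "complex^'n" where w: "w \<noteq> 0" "\<forall>A\<in>B. \<exists>l. A *v w = l *s w"
    using common_eig_finite[of B] by blast
  have sub: "subspace {A::complex^'n^'n. \<exists>l. A *v w = l *s w}"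
    unfolding subspace_def
  proof (intro conjI ballI allI)
    show "0 \<in> {A::complex^'n^'n. \<exists>l. A *v w = l *s w}"
      by (rule CollectI, rule exI[of _ 0]) (simp add: vec_eq_iff matrix_vector_mult_def)
  next
    fix x y assume "x \<in> {A::complex^'n^'n. \<exists>l. A *v w = l *s w}" "y \<in> {A::complex^'n^'n. \<exists>l. A *v w = l *s w}"
    then obtain a b where "x *v w = a *s w" "y *v w = b *s w" by auto
    then have "(x + y) *v w = (a + b) *s w" by (simp add: matvec_add vector_sadd_rdistrib)
    then show "x + y \<in> {A::complex^'n^'n. \<exists>l. A *v w = l *s w}" by blast
  next
    fix c :: real and x assume "x \<in> {A::complex^'n^'n. \<exists>l. A *v w = l *s w}"
    then obtain a where "x *v w = a *s w" by auto
    then have "(c *\<^sub>R x) *v w = (complex_of_real c * a) *s w" by (simp add: matvec_scaleR vector_smult_assoc)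
    then show "c *\<^sub>R x \<in> {A::complex^'n^'n. \<exists>l. A *v w = l *s w}" by blast
  qed
  have "\<forall>A\<in>S. \<exists>l. A *v w = l *s w"
  proof
    fix A assume "A \<in> S"
    then have "A \<in> span B" using B by auto
    moreover have "span B \<subseteq> {A::complex^'n^'n. \<exists>l. A *v w = l *s w}"
      using sub w(2) by (intro span_minimal) auto
    ultimately show "\<exists>l. A *v w = l *s w" by auto
  qed
  with w show ?thesis by blast
qed



lemma ms_left: "mat_smult c (A::complex^'n^'n) ** B = mat_smult c (A ** B)"
  by (simp add: mat_smult_def matrix_matrix_mult_def vec_eq_iff sum_distrib_left mult.assoc)

lemma ms_right: "(A::complex^'n^'n) ** mat_smult c B = mat_smult c (A ** B)"
  by (simp add: mat_smult_def matrix_matrix_mult_def vec_eq_iff sum_distrib_left mult.left_commute)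

lemma ms_ms: "mat_smult a (mat_smult b A) = mat_smult (a*b) A"
  by (simp add: mat_smult_def vec_eq_iff mult.assoc)

lemma ms_one: "mat_smult 1 A = A"
  by (simp add: mat_smult_def vec_eq_iff)

lemma ms_cancel: "(c::complex) \<noteq> 0 \<Longrightarrow> mat_smult c A = mat_smult c B \<Longrightarrow> A = B"
  by (metis ms_ms ms_one field_class.field_inverse mult.commute)

lemma ms_vec: "mat_smult c (A::complex^'n^'n) *v w = c *s (A *v w)"
  by (simp add: mat_smult_def matrix_vector_mult_def vec_eq_iff sum_distrib_left mult.assoc)

lemma det_ms: "det (mat_smult c (A::complex^'n^'n)) = c ^ CARD('n) * det A"
proof -
  have "mat_smult c A = (\<chi> i. c *s A$i)" by (simp add: mat_smult_def vec_eq_iff)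
  then have "det (mat_smult c A) = prod (\<lambda>_::'n. c) UNIV * det (\<chi> i. A$i)"
    using det_rows_mul[of "\<lambda>_::'n. c" "\<lambda>i::'n. A$i"] by simp
  then show ?thesis by simp
qed

lemma unitary_invertible: "unitary_mat U \<Longrightarrow> invertible U"
  unfolding unitary_mat_def invertible_def by blast

lemma minv: "invertible (A::complex^'n^'n) \<Longrightarrow> A ** matrix_inv A = mat 1 \<and> matrix_inv A ** A = mat 1"
  unfolding invertible_def matrix_inv_def by (rule someI_ex)

lemma comm_ms: "X ** Y = Y ** X \<Longrightarrow> mat_smult c (X::complex^'n^'n) ** Y = Y ** mat_smult c X"
  by (simp add: ms_left ms_right)

lemma comm_mul: "(X::complex^'n^'n) ** Y = Y ** X \<Longrightarrow> X' ** Y = Y ** X' \<Longrightarrow> (X ** X') ** Y = Y ** (X ** X')"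
  by (metis matrix_mul_assoc)

lemma comm_inv:
  assumes "invertible (X::complex^'n^'n)" "X ** Y = Y ** X"
  shows "matrix_inv X ** Y = Y ** matrix_inv X"
proof -
  let ?Xi = "matrix_inv X"
  have i: "X ** ?Xi = mat 1" "?Xi ** X = mat 1" using minv[OF assms(1)] by auto
  have "?Xi ** Y = ?Xi ** Y ** (X ** ?Xi)" by (simp add: i)
  also have "\<dots> = ?Xi ** (Y ** X) ** ?Xi" by (simp add: matrix_mul_assoc)
  also have "\<dots> = ?Xi ** (X ** Y) ** ?Xi" by (simp add: assms(2))
  also have "\<dots> = (?Xi ** X) ** Y ** ?Xi" by (simp add: matrix_mul_assoc)
  also have "\<dots> = Y ** ?Xi" by (simp add: i)
  finally show ?thesis .
qed

lemma key_comm: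
  assumes "invertible (Y::complex^'n^'n)" "c \<noteq> 0"
    "X ** A = mat_smult c (A ** X)" "Y ** A = mat_smult c (A ** Y)"
  shows "(X ** matrix_inv Y) ** A = A ** (X ** matrix_inv Y)"
proof -
  let ?Yi = "matrix_inv Y"
  have i: "Y ** ?Yi = mat 1" "?Yi ** Y = mat 1" using minv[OF assms(1)] by auto
  have "A ** ?Yi = ?Yi ** (Y ** A) ** ?Yi" by (simp add: matrix_mul_assoc i)
  also have "\<dots> = mat_smult c (?Yi ** A ** (Y ** ?Yi))"
    by (simp add: assms(4) ms_left ms_right matrix_mul_assoc)
  also have "\<dots> = mat_smult c (?Yi ** A)" by (simp add: i)
  finally have e: "A ** ?Yi = mat_smult c (?Yi ** A)" .
  have e1: "?Yi ** A = mat_smult (1/c) (A ** ?Yi)"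
    using e assms(2) by (simp add: ms_ms ms_one)
  have "(X ** ?Yi) ** A = X ** (?Yi ** A)" by (simp add: matrix_mul_assoc)
  also have "\<dots> = mat_smult (1/c) (X ** A ** ?Yi)" by (simp add: e1 ms_right matrix_mul_assoc)
  also have "\<dots> = mat_smult (1/c) (mat_smult c (A ** X) ** ?Yi)" by (simp add: assms(3))
  also have "\<dots> = A ** (X ** ?Yi)" using assms(2) by (simp add: ms_left ms_ms ms_one matrix_mul_assoc)
  finally show ?thesis .
qed

lemma root_unity:
  assumes "invertible (X::complex^'n^'n)" "invertible A" "X ** A = mat_smult c (A ** X)"
  shows "c ^ CARD('n) = 1"
proof -
  have "det X * det A = c ^ CARD('n) * (det A * det X)"
    using arg_cong[OF assms(3), of det] by (simp add: det_mul det_ms)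
  moreover have "det X \<noteq> 0" "det A \<noteq> 0" using assms invertible_det_nz by auto
  ultimately show ?thesis by (simp add: mult.commute)
qed

lemma vec_scal_cancel: "(a::complex) *s w = b *s w \<Longrightarrow> w \<noteq> 0 \<Longrightarrow> a = b"
  by (auto simp: vec_eq_iff)


lemma PU_prod:
  assumes "PU_hom G U" "g \<in> carrier G" "h \<in> carrier G"
  shows "\<exists>c. c \<noteq> 0 \<and> U (g \<otimes>\<^bsub>G\<^esub> h) = mat_smult c (U g ** U h)"
  using assms unfolding PU_hom_def proj_eq_def by blast

lemma PU_inv_mat:
  assumes "PU_hom G U" "g \<in> carrier G"
  shows "invertible (U g)"
  using assms unfolding PU_hom_def by (blast intro: unitary_invertible)

lemma U_one:
  fixes U :: "'g \<Rightarrow> complex^'n^'n"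
  assumes "group G" "PU_hom G U"
  shows "\<exists>s. U \<one>\<^bsub>G\<^esub> = mat_smult s (mat 1)"
proof -
  interpret group G by fact
  obtain a where a: "a \<noteq> 0" "U (\<one>\<^bsub>G\<^esub> \<otimes>\<^bsub>G\<^esub> \<one>\<^bsub>G\<^esub>) = mat_smult a (U \<one>\<^bsub>G\<^esub> ** U \<one>\<^bsub>G\<^esub>)"
    using PU_prod[OF assms(2)] by blast
  have inv: "invertible (U \<one>\<^bsub>G\<^esub>)" using PU_inv_mat[OF assms(2)] by simp
  let ?I = "matrix_inv (U \<one>\<^bsub>G\<^esub>)"
  have i: "U \<one>\<^bsub>G\<^esub> ** ?I = mat 1" using minv[OF inv] by auto
  have "mat 1 = U \<one>\<^bsub>G\<^esub> ** ?I" using i by simp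
  also have "\<dots> = mat_smult a (U \<one>\<^bsub>G\<^esub> ** U \<one>\<^bsub>G\<^esub>) ** ?I" using a by simp
  also have "\<dots> = mat_smult a (U \<one>\<^bsub>G\<^esub> ** (U \<one>\<^bsub>G\<^esub> ** ?I))" by (simp add: ms_left matrix_mul_assoc)
  also have "\<dots> = mat_smult a (U \<one>\<^bsub>G\<^esub>)" by (simp add: i)
  finally have "U \<one>\<^bsub>G\<^esub> = mat_smult (1/a) (mat 1)" using a(1) by (simp add: ms_ms ms_one)
  then show ?thesis by blast
qed

lemma U_inv:
  fixes U :: "'g \<Rightarrow> complex^'n^'n"
  assumes "group G" "PU_hom G U" "g \<in> carrier G"
  shows "\<exists>t. U (inv\<^bsub>G\<^esub> g) = mat_smult t (matrix_inv (U g))"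
proof -
  interpret group G by fact
  obtain s where s: "U \<one>\<^bsub>G\<^esub> = mat_smult s (mat 1)" using U_one[OF assms(1,2)] by blast
  obtain b where b: "b \<noteq> 0" "U (inv\<^bsub>G\<^esub> g \<otimes>\<^bsub>G\<^esub> g) = mat_smult b (U (inv\<^bsub>G\<^esub> g) ** U g)"
    using PU_prod[OF assms(2), of "inv\<^bsub>G\<^esub> g" g] assms(3) by auto
  have "U (inv\<^bsub>G\<^esub> g) ** U g = mat_smult (1/b) (U \<one>\<^bsub>G\<^esub>)"
    using b assms(3) by (simp add: ms_ms ms_one)
  then have e: "U (inv\<^bsub>G\<^esub> g) ** U g = mat_smult (s/b) (mat 1)" using s by (simp add: ms_ms)
  have inv: "invertible (U g)" using PU_inv_mat[OF assms(2,3)] .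
  let ?I = "matrix_inv (U g)"
  have i: "U g ** ?I = mat 1" using minv[OF inv] by auto
  have "U (inv\<^bsub>G\<^esub> g) = U (inv\<^bsub>G\<^esub> g) ** (U g ** ?I)" by (simp add: i)
  also have "\<dots> = mat_smult (s/b) ?I" by (simp add: matrix_mul_assoc e ms_left)
  finally show ?thesis by blast
qed

lemma U_comm_scalar:
  fixes U :: "'g \<Rightarrow> complex^'n^'n"
  assumes "comm_group G" "PU_hom G U" "g \<in> carrier G" "h \<in> carrier G"
  shows "\<exists>c. U g ** U h = mat_smult c (U h ** U g)"
proof -
  interpret comm_group G by fact
  obtain a where a: "a \<noteq> 0" "U (g \<otimes>\<^bsub>G\<^esub> h) = mat_smult a (U g ** U h)"
    using PU_prod[OF assms(2,3,4)] by blast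
  obtain b where b: "b \<noteq> 0" "U (h \<otimes>\<^bsub>G\<^esub> g) = mat_smult b (U h ** U g)"
    using PU_prod[OF assms(2,4,3)] by blast
  have "g \<otimes>\<^bsub>G\<^esub> h = h \<otimes>\<^bsub>G\<^esub> g" using assms(3,4) m_comm by blast
  then have "mat_smult a (U g ** U h) = mat_smult b (U h ** U g)" using a b by simp
  then have "mat_smult (1/a) (mat_smult a (U g ** U h)) = mat_smult (1/a) (mat_smult b (U h ** U g))"
    by simp
  then have "U g ** U h = mat_smult (b/a) (U h ** U g)" using a(1) by (simp add: ms_ms ms_one)
  then show ?thesis by blast
qed

lemma mm_add_r: "((A::complex^'n^'n) + B) ** C = A ** C + B ** C"
  by (vector matrix_matrix_mult_def sum.distrib[symmetric] field_simps)

lemma mm_scaleR_r: "(Z::complex^'n^'n) ** (c *\<^sub>R A) = c *\<^sub>R (Z ** A)"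
  by (simp add: vec_eq_iff matrix_matrix_mult_def) (simp add: scaleR_conv_of_real sum_distrib_left mult.left_commute)

lemma mm_scaleR_l: "(c *\<^sub>R A) ** (Z::complex^'n^'n) = c *\<^sub>R (A ** Z)"
  by (simp add: vec_eq_iff matrix_matrix_mult_def) (simp add: scaleR_conv_of_real sum_distrib_left mult.assoc)

lemma subspace_comm: "subspace {A::complex^'n^'n. Z ** A = A ** Z}"
  unfolding subspace_def
  by (auto simp: matrix_add_ldistrib mm_add_r mm_scaleR_r mm_scaleR_l)

theorem proposition4p6:
  fixes G :: "('g, 'b) monoid_scheme" and U :: "'g \<Rightarrow> complex^'n^'n"
  assumes "comm_group G"
    and "PU_hom G U"
  shows "\<exists>M. subgroup M G \<and> finite (rcosets\<^bsub>G\<^esub> M) \<and> (\<exists>\<psi>. GL_lift_on G M U \<psi>)"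
proof -
  interpret comm_group G by fact
  have grp: "group G" by (rule is_group)
  have invU: "\<And>g. g \<in> carrier G \<Longrightarrow> invertible (U g)" using PU_inv_mat[OF assms(2)] .
  define M where "M = {g \<in> carrier G. \<forall>h\<in>carrier G. U g ** U h = U h ** U g}"
  have subM: "subgroup M G"
  proof (rule subgroupI)
    show "M \<subseteq> carrier G" unfolding M_def by blast
  next
    obtain s where s: "U \<one>\<^bsub>G\<^esub> = mat_smult s (mat 1)" using U_one[OF grp assms(2)] by blast
    have "\<one>\<^bsub>G\<^esub> \<in> M" unfolding M_def
      using s by (auto simp: ms_left ms_right)
    then show "M \<noteq> {}" by blast
  next
    fix a assume a: "a \<in> M"
    then have ac: "a \<in> carrier G" unfolding M_def by blast
    obtain t where t: "U (inv\<^bsub>G\<^esub> a) = mat_smult t (matrix_inv (U a))" using U_inv[OF grp assms(2) ac] by blast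
    show "inv\<^bsub>G\<^esub> a \<in> M" unfolding M_def
    proof (intro CollectI conjI ballI)
      show "inv\<^bsub>G\<^esub> a \<in> carrier G" using ac by simp
      fix h assume h: "h \<in> carrier G"
      have "U a ** U h = U h ** U a" using a h unfolding M_def by blast
      then have "matrix_inv (U a) ** U h = U h ** matrix_inv (U a)" by (rule comm_inv[OF invU[OF ac]])
      then show "U (inv\<^bsub>G\<^esub> a) ** U h = U h ** U (inv\<^bsub>G\<^esub> a)" unfolding t by (rule comm_ms)
    qed
  next
    fix a b assume ab: "a \<in> M" "b \<in> M"
    then have abc: "a \<in> carrier G" "b \<in> carrier G" unfolding M_def by auto
    obtain c where c: "c \<noteq> 0" "U (a \<otimes>\<^bsub>G\<^esub> b) = mat_smult c (U a ** U b)"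
      using PU_prod[OF assms(2) abc] by blast
    show "a \<otimes>\<^bsub>G\<^esub> b \<in> M" unfolding M_def
    proof (intro CollectI conjI ballI)
      show "a \<otimes>\<^bsub>G\<^esub> b \<in> carrier G" using abc by simp
      fix h assume h: "h \<in> carrier G"
      have "U a ** U h = U h ** U a" "U b ** U h = U h ** U b" using ab h unfolding M_def by auto
      then have "(U a ** U b) ** U h = U h ** (U a ** U b)" by (rule comm_mul)
      then show "U (a \<otimes>\<^bsub>G\<^esub> b) ** U h = U h ** U (a \<otimes>\<^bsub>G\<^esub> b)" unfolding c(2) by (rule comm_ms)
    qed
  qed
  \<comment> \<open>finite index\<close>
  obtain B where B: "B \<subseteq> U ` carrier G" "independent B" "U ` carrier G \<subseteq> span B"
      "card B = dim (U ` carrier G)"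
    by (rule real_vector.basis_exists[of "U ` carrier G"])
  have finB: "finite B" using independent_bound[OF B(2)] by (rule conjunct1)
  let ?R = "{c::complex. c ^ CARD('n) = 1}"
  define f where "f g = restrict (\<lambda>A. SOME c. c ^ CARD('n) = 1 \<and> U g ** A = mat_smult c (A ** U g)) B" for g
  have fP: "(f g A) ^ CARD('n) = 1 \<and> U g ** A = mat_smult (f g A) (A ** U g)"
    if g: "g \<in> carrier G" and A: "A \<in> B" for g A
  proof -
    obtain h where h: "h \<in> carrier G" "A = U h" using A B(1) by blast
    obtain c where c: "U g ** U h = mat_smult c (U h ** U g)"
      using U_comm_scalar[OF assms g h(1)] by blast
    have "c ^ CARD('n) = 1" using root_unity[OF invU[OF g] invU[OF h(1)] c] .
    then have "\<exists>c. c ^ CARD('n) = 1 \<and> U g ** A = mat_smult c (A ** U g)" using c h(2) by blast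
    then have "(SOME c. c ^ CARD('n) = 1 \<and> U g ** A = mat_smult c (A ** U g)) ^ CARD('n) = 1 \<and>
        U g ** A = mat_smult (SOME c. c ^ CARD('n) = 1 \<and> U g ** A = mat_smult c (A ** U g)) (A ** U g)"
      by (rule someI_ex)
    then show ?thesis using A by (simp add: f_def)
  qed
  have finR: "finite ?R" by (rule finite_roots_unity) simp
  have "f ` carrier G \<subseteq> PiE B (\<lambda>_. ?R)"
    using fP by (auto simp: f_def)
  then have finF: "finite (f ` carrier G)"
    by (rule finite_subset) (intro finite_PiE finB finR)
  have key: "g \<otimes>\<^bsub>G\<^esub> inv\<^bsub>G\<^esub> g' \<in> M" if g: "g \<in> carrier G" and g': "g' \<in> carrier G" and fe: "f g = f g'" for g g'
  proof -
    let ?Z = "U g ** matrix_inv (U g')"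
    have "\<forall>A\<in>B. ?Z ** A = A ** ?Z"
    proof
      fix A assume A: "A \<in> B"
      have c1: "(f g A) ^ CARD('n) = 1" "U g ** A = mat_smult (f g A) (A ** U g)" using fP[OF g A] by auto
      have c2: "U g' ** A = mat_smult (f g A) (A ** U g')" using fP[OF g' A] fe by auto
      have nz: "CARD('n) \<noteq> 0" by simp
      have "f g A \<noteq> 0"
      proof
        assume "f g A = 0"
        then show False using c1(1) nz by (simp add: power_0_left)
      qed
      then show "?Z ** A = A ** ?Z" by (rule key_comm[OF invU[OF g'] _ c1(2) c2])
    qed
    then have "span B \<subseteq> {A. ?Z ** A = A ** ?Z}" using subspace_comm by (intro span_minimal) auto
    then have Zc: "\<forall>h\<in>carrier G. ?Z ** U h = U h ** ?Z" using B(3) by blast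
    obtain t where t: "U (inv\<^bsub>G\<^esub> g') = mat_smult t (matrix_inv (U g'))" using U_inv[OF grp assms(2) g'] by blast
    obtain a where a: "a \<noteq> 0" "U (g \<otimes>\<^bsub>G\<^esub> inv\<^bsub>G\<^esub> g') = mat_smult a (U g ** U (inv\<^bsub>G\<^esub> g'))"
      using PU_prod[OF assms(2) g, of "inv\<^bsub>G\<^esub> g'"] g' by auto
    have Ue: "U (g \<otimes>\<^bsub>G\<^esub> inv\<^bsub>G\<^esub> g') = mat_smult (a * t) ?Z" using a(2) t by (simp add: ms_right ms_ms)
    show ?thesis unfolding M_def
    proof (intro CollectI conjI ballI)
      show "g \<otimes>\<^bsub>G\<^esub> inv\<^bsub>G\<^esub> g' \<in> carrier G" using g g' by simp
      fix h assume "h \<in> carrier G"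
      then have "?Z ** U h = U h ** ?Z" using Zc by blast
      then show "U (g \<otimes>\<^bsub>G\<^esub> inv\<^bsub>G\<^esub> g') ** U h = U h ** U (g \<otimes>\<^bsub>G\<^esub> inv\<^bsub>G\<^esub> g')" unfolding Ue by (rule comm_ms)
    qed
  qed
  have "rcosets\<^bsub>G\<^esub> M \<subseteq> (\<lambda>v. M #>\<^bsub>G\<^esub> (SOME g. g \<in> carrier G \<and> f g = v)) ` (f ` carrier G)"
  proof
    fix X assume "X \<in> rcosets\<^bsub>G\<^esub> M"
    then obtain a where a: "a \<in> carrier G" "X = M #>\<^bsub>G\<^esub> a" unfolding RCOSETS_def by blast
    define g0 where "g0 = (SOME g. g \<in> carrier G \<and> f g = f a)"
    have "\<exists>g. g \<in> carrier G \<and> f g = f a" using a by blast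
    then have g0: "g0 \<in> carrier G \<and> f g0 = f a" unfolding g0_def by (rule someI_ex)
    have "a \<otimes>\<^bsub>G\<^esub> inv\<^bsub>G\<^esub> g0 \<in> M" using key[OF a(1)] g0 by auto
    then have "a \<in> M #>\<^bsub>G\<^esub> g0" by (rule subgroup.rcos_module_rev[OF subM grp conjunct1[OF g0] a(1)])
    then have eq: "M #>\<^bsub>G\<^esub> g0 = M #>\<^bsub>G\<^esub> a" by (rule repr_independence[OF _ conjunct1[OF g0] subM])
    have "X = (\<lambda>v. M #>\<^bsub>G\<^esub> (SOME g. g \<in> carrier G \<and> f g = v)) (f a)"
      using a(2) eq unfolding g0_def by simp
    then show "X \<in> (\<lambda>v. M #>\<^bsub>G\<^esub> (SOME g. g \<in> carrier G \<and> f g = v)) ` (f ` carrier G)"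
      using a(1) by blast
  qed
  then have finM: "finite (rcosets\<^bsub>G\<^esub> M)" by (rule finite_subset) (intro finite_imageI finF)
  \<comment> \<open>the lift\<close>
  have "\<forall>A\<in>U ` M. \<forall>A'\<in>U ` M. A ** A' = A' ** A"
  proof (intro ballI)
    fix A A' assume "A \<in> U ` M" "A' \<in> U ` M"
    then obtain m m' where mm: "m \<in> M" "m' \<in> M" "A = U m" "A' = U m'" by blast
    then have "m' \<in> carrier G" unfolding M_def by blast
    then show "A ** A' = A' ** A" using mm unfolding M_def by blast
  qed
  then obtain w :: "complex^'n" where w: "w \<noteq> 0" "\<forall>A\<in>U ` M. \<exists>l. A *v w = l *s w"
    using common_eig[of "U ` M"] by blast
  define lam where "lam m = (SOME l. U m *v w = l *s w)" for m
  have lamP: "U m *v w = lam m *s w" if "m \<in> M" for m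
  proof -
    have "\<exists>l. U m *v w = l *s w" using w(2) that by blast
    then show ?thesis unfolding lam_def by (rule someI_ex)
  qed
  have lam0: "lam m \<noteq> 0" if m: "m \<in> M" for m
  proof
    assume "lam m = 0"
    then have "U m *v w = 0" using lamP[OF m] by (simp add: vec_eq_iff)
    moreover have "m \<in> carrier G" using m unfolding M_def by blast
    then have "matrix_inv (U m) ** U m = mat 1" using minv[OF invU] by blast
    ultimately have "w = 0"
    proof -
      assume z: "U m *v w = 0" and i: "matrix_inv (U m) ** U m = mat 1"
      have "w = (matrix_inv (U m) ** U m) *v w" by (simp add: i)
      also have "\<dots> = matrix_inv (U m) *v (U m *v w)" by (simp add: matrix_vector_mul_assoc)
      also have "\<dots> = 0" by (simp add: z)
      finally show ?thesis .
    qed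
    then show False using w(1) by simp
  qed
  define \<psi> where "\<psi> m = mat_smult (1 / lam m) (U m)" for m
  have "GL_lift_on G M U \<psi>"
    unfolding GL_lift_on_def
  proof (intro conjI ballI)
    fix m assume m: "m \<in> M"
    then have mc: "m \<in> carrier G" unfolding M_def by blast
    show "invertible (\<psi> m)"
      using invU[OF mc] lam0[OF m] by (simp add: \<psi>_def invertible_det_nz det_ms)
    show "proj_eq (\<psi> m) (U m)" unfolding proj_eq_def \<psi>_def using lam0[OF m] by (intro exI[of _ "1 / lam m"]) simp
  next
    fix m m' assume m: "m \<in> M" and m': "m' \<in> M"
    then have mc: "m \<in> carrier G" "m' \<in> carrier G" unfolding M_def by auto
    have mm': "m \<otimes>\<^bsub>G\<^esub> m' \<in> M" using subgroup.m_closed[OF subM m m'] .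
    obtain a where a: "a \<noteq> 0" "U (m \<otimes>\<^bsub>G\<^esub> m') = mat_smult a (U m ** U m')"
      using PU_prod[OF assms(2) mc] by blast
    have "lam (m \<otimes>\<^bsub>G\<^esub> m') *s w = U (m \<otimes>\<^bsub>G\<^esub> m') *v w" using lamP[OF mm'] by simp
    also have "\<dots> = a *s (U m *v (U m' *v w))" by (simp add: a(2) ms_vec matrix_vector_mul_assoc)
    also have "\<dots> = (a * lam m * lam m') *s w"
      by (simp add: lamP[OF m] lamP[OF m'] vector_scalar_commute vector_smult_assoc mult.commute mult.left_commute)
    finally have le: "lam (m \<otimes>\<^bsub>G\<^esub> m') = a * lam m * lam m'" using w(1) by (rule vec_scal_cancel)
    show "\<psi> (m \<otimes>\<^bsub>G\<^esub> m') = \<psi> m ** \<psi> m'"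
      unfolding \<psi>_def a(2) le
      using a(1) lam0[OF m] lam0[OF m'] by (simp add: ms_left ms_right ms_ms mult.commute)
  qed
  then show ?thesis using subM finM by blast
qed

end
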